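(* Let $\mathcal{A}=\{m\ge 1:\ c_m=1\}$. A positive integer $n$ belongs to $\mathcal{A}$ if and only if, in the base-$4$ expansion of $n+1$, every digit other than the last (least significant) one is $0$ or $2$; equivalently, the binary digits of $n+1$ at positions $2k$ (i.e. with weight $2^{2k}$) are $0$ for all $k\ge 1$.
   Context: For $n\in\mathbb{N}$ let $s_2(n)$ be the sum of the binary digits of $n$ and $t_n=s_2(n)\bmod 2$ (the Prouhet–Thue–Morse sequence). Let $F(X)=\sum_{n\ge1}t_nX^n\in\mathbb{F}_2[[X]]$ and let $G(X)=\sum_{n\ge1}c_nX^n\in\mathbb{F}_2[[X]]$ be its compositional inverse, i.e. $F(G(X))=G(F(X))=X$. The $c_n$ are identified with integers in $\{0,1\}$. *)

theory Defs
  imports "HOL-Computational_Algebra.Formal_Power_Series" "HOL-Library.Z2"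
begin

fun s2 :: "nat \<Rightarrow> nat" where
  "s2 n = (if n = 0 then 0 else n mod 2 + s2 (n div 2))"

declare s2.simps[simp del]

definition tm :: "nat \<Rightarrow> nat" where
  "tm n = s2 n mod 2"

definition F_TM :: "bit fps" where
  "F_TM = Abs_fps (\<lambda>n. if n \<ge> 1 then of_nat (tm n) else 0)"

definition G_TM :: "bit fps" where
  "G_TM = fps_inv F_TM"

end

theory Submission
  imports Defs
begin
unbundle fps_syntax

lemma bit_add_self[simp]: "(x::bit) + x = 0"
  by (cases x) simp_all

lemma sym_sum_bit:
  fixes h :: "nat \<Rightarrow> nat \<Rightarrow> bit"
  assumes sym: "\<And>i j. h i j = h j i"
  shows "(\<Sum>i=0..n. h i (n-i)) = (if even n then h (n div 2) (n div 2) else 0)"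
proof -
  define L where "L = {i. 2*i < n}"
  define R where "R = {i. n < 2*i \<and> i \<le> n}"
  define M where "M = {i. 2*i = n}"
  have dec: "{0..n} = L \<union> (M \<union> R)" unfolding L_def R_def M_def by auto
  have fin: "finite L" "finite M" "finite R" using dec by (metis finite_Un finite_atLeastAtMost)+
  have "sum (\<lambda>i. h i (n-i)) R = sum (\<lambda>i. h i (n-i)) L"
  proof (rule sum.reindex_bij_witness[where i="\<lambda>i. n - i" and j="\<lambda>i. n - i"])
  qed (auto simp: L_def R_def sym)
  hence "sum (\<lambda>i. h i (n-i)) {0..n} = sum (\<lambda>i. h i (n-i)) M"
    unfolding dec using fin
    by (simp add: sum.union_disjoint L_def R_def M_def Int_Un_distrib Int_Un_distrib2 disjoint_iff
       ac_simps del: bit_add_self)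
  moreover have "M = (if even n then {n div 2} else {})" unfolding M_def by auto
  ultimately show ?thesis by (auto simp: left_diff_distrib)
qed

lemma bit_mult_self[simp]: "(x::bit) * x = x"
  by (cases x) simp_all

lemma sq_nth: "((A::bit fps) * A) $ n = (if even n then A $ (n div 2) else 0)"
  unfolding fps_mult_nth
  using sym_sum_bit[of "\<lambda>i j. A$i * A$j" n] by (simp add: mult.commute)

lemma fourth_nth: "((A::bit fps)^4) $ n = (if 4 dvd n then A $ (n div 4) else 0)"
proof -
  have "A^4 = (A*A)*(A*A)" by (simp add: power4_eq_xxxx ac_simps)
  hence "(A^4)$n = (if even n \<and> even (n div 2) then A $ (n div 2 div 2) else 0)"
    by (simp add: sq_nth)
  also have "\<dots> = (if 4 dvd n then A $ (n div 4) else 0)"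
    by (auto simp: div_div_eq_right)
  finally show ?thesis .
qed

lemma two_bit_fps[simp]: "(2::bit fps) = 0"
  by (simp add: numeral_fps_const)
lemma three_bit_fps[simp]: "(3::bit fps) = 1"
  by (simp add: numeral_fps_const)

lemma fps_add_self[simp]: "(a::bit fps) + a = 0"
proof -
  have "a + a = 2 * a" by simp
  thus ?thesis by simp
qed

lemma bit_fps_sq: "((a::bit fps) + b)^2 = a^2 + b^2"
proof -
  have "(a+b)^2 = a^2 + 2*a*b + b^2" by (simp add: power2_sum)
  thus ?thesis by simp
qed

lemma bit_fps_cube: "((a::bit fps) + b)^3 = a^3 + a^2*b + a*b^2 + b^3"
proof -
  have "(a+b)^3 = a^3 + 3*(a^2*b) + 3*(a*b^2) + b^3" by (simp add: algebra_simps power2_eq_square power3_eq_cube)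
  thus ?thesis by simp
qed

definition gp :: "nat \<Rightarrow> bool" where
  "gp a = (\<forall>k. a div 4^k mod 4 \<in> {0,2})"

lemma gp_rec: "gp n \<longleftrightarrow> n mod 4 \<in> {0,2} \<and> gp (n div 4)"
proof
  assume "gp n"
  then have a: "n div 4^k mod 4 \<in> {0,2}" for k unfolding gp_def by blast
  have "n mod 4 \<in> {0,2}" using a[of 0] by simp
  moreover have "gp (n div 4)" unfolding gp_def
  proof
    fix j
    have "n div 4 div 4^j = n div 4^(Suc j)" by (simp add: div_mult2_eq)
    then show "n div 4 div 4 ^ j mod 4 \<in> {0, 2}" using a[of "Suc j"] by simp
  qed
  ultimately show "n mod 4 \<in> {0,2} \<and> gp (n div 4)" by blast
next
  assume h: "n mod 4 \<in> {0,2} \<and> gp (n div 4)"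
  show "gp n" unfolding gp_def
  proof
    fix k show "n div 4^k mod 4 \<in> {0,2}"
    proof (cases k)
      case 0 then show ?thesis using h by simp
    next
      case (Suc j)
      have "n div 4^k = n div 4 div 4^j" by (simp add: Suc div_mult2_eq)
      then show ?thesis using h unfolding gp_def by simp
    qed
  qed
qed

lemma gp0[simp]: "gp 0" by (simp add: gp_def)

definition Gg :: "bit fps" where "Gg = Abs_fps (\<lambda>a. if gp a then 1 else 0)"
definition Hs :: "bit fps" where "Hs = Abs_fps (\<lambda>m. if gp (m div 4) then 1 else 0)"

lemma Gg_eq: "Gg = (1 + fps_X^2) * Gg^4"
proof (rule fps_ext)
  fix n
  have "((1 + fps_X^2) * Gg^4) $ n = (Gg^4)$n + (if n < 2 then 0 else (Gg^4)$(n-2))"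
    by (simp add: distrib_right fps_X_power_mult_nth)
  also have "\<dots> = Gg $ n"
  proof -
    define q where "q = n div 4"
  define r where "r = n mod 4"
  have qr: "n = 4*q + r" "r < 4" unfolding q_def r_def by simp_all
    have "r = 0 \<or> r = 1 \<or> r = 2 \<or> r = 3" using qr by auto
    moreover have "gp n \<longleftrightarrow> r \<in> {0,2} \<and> gp q" using gp_rec[of n] qr by simp
    moreover have "\<not> 4 dvd (4*q+1)" "\<not> 4 dvd (4*q+3)" "\<not> 4 dvd (4*q+2)" by presburger+
    moreover have "q > 0 \<Longrightarrow> \<not> 4 dvd (4*q-2)" "q > 0 \<Longrightarrow> \<not> 4 dvd (4*q-Suc 0)" by presburger+
    ultimately show ?thesis using qr
      by (elim disjE) (auto simp add: fourth_nth Gg_def)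
  qed
  finally show "Gg $ n = ((1 + fps_X^2) * Gg^4) $ n" by simp
qed

lemma F4a: "((A::bit fps)^4) $ (4*p) = A $ p"
  by (simp add: fourth_nth)
lemma F4b: "((A::bit fps)^4) $ (4*p+1) = 0" "((A::bit fps)^4) $ (4*p+2) = 0" "((A::bit fps)^4) $ (4*p+3) = 0"
proof -
  have "\<not> 4 dvd (4*p+1)" "\<not> 4 dvd (4*p+2)" "\<not> 4 dvd (4*p+3)" by presburger+
  then show "((A::bit fps)^4) $ (4*p+1) = 0" "((A::bit fps)^4) $ (4*p+2) = 0" "((A::bit fps)^4) $ (4*p+3) = 0"
    by (simp_all only: fourth_nth if_False)
qed

lemma Hs_eq: "Hs = (1 + fps_X + fps_X^2 + fps_X^3) * Gg^4"
proof (rule fps_ext)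
  fix n :: nat
  define q where "q = n div 4"
  define r where "r = n mod 4"
  have qr: "n = 4*q + r" "r < 4" unfolding q_def r_def by simp_all
  have "((1 + fps_X + fps_X^2 + fps_X^3) * Gg^4) $ n = (Gg^4)$n + (if n = 0 then 0 else (Gg^4)$(n-1))
      + (if n < 2 then 0 else (Gg^4)$(n-2)) + (if n < 3 then 0 else (Gg^4)$(n-3))"
    by (simp only: distrib_right mult_1 fps_add_nth fps_X_mult_nth fps_X_power_mult_nth)
  also have "\<dots> = Gg $ q"
  proof -
    have "r = 0 \<or> r = 1 \<or> r = 2 \<or> r = 3" using qr by auto
    moreover
    { assume r: "r = 0"
      have ?thesis
      proof (cases q)
        case 0 then show ?thesis using qr r by simp
      next
        case (Suc p)
        have "n = 4*Suc p" "n - 1 = 4*p+3" "n-2 = 4*p+2" "n-3 = 4*p+1" using qr r Suc by simp_all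
        then show ?thesis using Suc by (simp only: F4a F4b) simp
      qed }
    moreover
    { assume r: "r = 1"
      have ?thesis
      proof (cases q)
        case 0 then show ?thesis using qr r F4a[of Gg 0] F4b[of Gg 0] by simp
      next
        case (Suc p)
        have "n = 4*Suc p+1" "n - 1 = 4*Suc p" "n-2 = 4*p+3" "n-3 = 4*p+2" using qr r Suc by simp_all
        then show ?thesis using Suc by (simp only: F4a F4b) simp
      qed }
    moreover
    { assume r: "r = 2"
      have ?thesis
      proof (cases q)
        case 0 then show ?thesis using qr r F4a[of Gg 0] F4b[of Gg 0] by simp
      next
        case (Suc p)
        have "n = 4*Suc p+2" "n - 1 = 4*Suc p+1" "n-2 = 4*Suc p" "n-3 = 4*p+3" using qr r Suc by simp_all
        then show ?thesis using Suc by (simp only: F4a F4b) simp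
      qed }
    moreover
    { assume r: "r = 3"
      have "n = 4*q+3" "n - 1 = 4*q+2" "n-2 = 4*q+1" "n-3 = 4*q" using qr r by simp_all
      then have ?thesis by (simp only: F4a F4b) simp }
    ultimately show ?thesis by blast
  qed
  also have "\<dots> = Hs $ n" using qr by (simp add: Gg_def Hs_def)
  finally show "Hs $ n = ((1 + fps_X + fps_X^2 + fps_X^3) * Gg^4) $ n" by simp
qed

lemma Gg0: "Gg $ 0 = 1" by (simp add: Gg_def)

lemma X1sq: "(1 + fps_X :: bit fps)^2 = 1 + fps_X^2"
  using bit_fps_sq[of 1 fps_X] by simp

lemma X1cube: "(1 + fps_X :: bit fps)^3 = 1 + fps_X + fps_X^2 + fps_X^3"
  using bit_fps_cube[of 1 fps_X] by simp

lemma Gg_cube: "(1 + fps_X)^2 * Gg^3 = 1"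
proof -
  have e: "(1 + fps_X^2) * Gg^4 = Gg * ((1 + fps_X)^2 * Gg^3)"
    by (simp only: X1sq) (simp add: eval_nat_numeral ac_simps)
  have "Gg * 1 = Gg * ((1 + fps_X)^2 * Gg^3)"
    using Gg_eq e by simp
  moreover have "Gg \<noteq> 0" using Gg0 by auto
  ultimately show ?thesis by simp
qed

lemma Hs_cube: "Hs^3 = 1 + fps_X"
proof -
  have a: "Hs^3 = (1 + fps_X)^9 * Gg^12"
    unfolding Hs_eq X1cube[symmetric] by (simp add: power_mult_distrib power_mult[symmetric])
  have b: "(1 + fps_X) * ((1 + fps_X)^2 * Gg^3)^4 = (1 + fps_X)^9 * Gg^12"
    by (simp add: power_mult_distrib power_mult[symmetric] mult.assoc[symmetric] power_Suc[symmetric] del: power_Suc)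
  have "Hs^3 = (1 + fps_X) * ((1 + fps_X)^2 * Gg^3)^4" using a b by simp
  thus ?thesis by (simp add: Gg_cube)
qed

definition Gc :: "bit fps" where
  "Gc = Abs_fps (\<lambda>n. if n \<ge> 1 \<and> gp ((n+1) div 4) then 1 else 0)"

definition EE :: "bit fps \<Rightarrow> bit fps" where
  "EE Y = (1 + Y + Y^2 + Y^3) * fps_X^2 + (1 + Y^2) * fps_X + Y"

lemma XGc: "fps_X * Gc + 1 + fps_X = Hs"
proof (rule fps_ext)
  fix n
  show "(fps_X * Gc + 1 + fps_X) $ n = Hs $ n"
  proof (cases "n \<le> 1")
    case True
    then have "n = 0 \<or> n = 1" by auto
    then show ?thesis by (auto simp: Gc_def Hs_def)
  next
    case False
    then show ?thesis by (auto simp: Gc_def Hs_def)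
  qed
qed

lemma EE_Gc: "EE Gc = 0"
proof -
  define V where "V = fps_X * (1 + Gc)"
  have HV: "Hs = V + 1" using XGc unfolding V_def by (simp add: algebra_simps)
  have "(V + 1)^3 = V^3 + V^2 + V + 1"
    using bit_fps_cube[of V 1] by simp
  hence "V^3 + V^2 + V + 1 = fps_X + 1" using Hs_cube HV by (simp add: add.commute)
  hence V3: "V^3 + V^2 + V = fps_X" by simp
  have XG: "fps_X * Gc = V + fps_X"
  proof -
    have "V + fps_X = fps_X * Gc + (fps_X + fps_X)" unfolding V_def by (simp add: algebra_simps)
    thus ?thesis by simp
  qed
  have "fps_X * EE Gc = ((1 + Gc)^3 * fps_X^3) + ((1 + Gc)^2 * fps_X^2) + fps_X * Gc"
    unfolding EE_def using bit_fps_cube[of 1 Gc] bit_fps_sq[of 1 Gc]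
    by (simp add: algebra_simps eval_nat_numeral)
  also have "\<dots> = V^3 + V^2 + V + fps_X"
    unfolding XG V_def by (simp add: power_mult_distrib ac_simps)
  also have "\<dots> = 0" using V3 by simp
  finally show ?thesis by simp
qed

lemma of_nat_bit_mod2: "(of_nat (k mod 2) :: bit) = of_nat k"
proof -
  have "(of_nat k :: bit) = of_nat (k mod 2 + 2 * (k div 2))" by simp
  also have "\<dots> = of_nat (k mod 2)" by (simp only: of_nat_add of_nat_mult) simp
  finally show ?thesis by simp
qed

definition tb :: "nat \<Rightarrow> bit" where "tb n = of_nat (tm n)"

lemma s2_0[simp]: "s2 0 = 0" by (simp add: s2.simps)
lemma s2_even: "s2 (2*m) = s2 m"
  by (cases "m = 0") (simp_all add: s2.simps[of "2*m"])
lemma s2_odd: "s2 (2*m+1) = Suc (s2 m)"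
  by (subst s2.simps) simp

lemma tb_0: "tb 0 = 0" by (simp add: tb_def tm_def)
lemma tb_even: "tb (2*m) = tb m" by (simp add: tb_def tm_def s2_even)
lemma tb_odd: "tb (2*m+1) = 1 + tb m"
proof -
  have "tb (2*m+1) = of_nat (s2 (2*m+1))" by (simp only: tb_def tm_def of_nat_bit_mod2)
  also have "\<dots> = of_nat (Suc (s2 m))" by (simp only: s2_odd)
  also have "\<dots> = 1 + of_nat (s2 m)" by (simp only: of_nat_Suc add.commute)
  also have "\<dots> = 1 + tb m" by (simp only: tb_def tm_def of_nat_bit_mod2)
  finally show ?thesis .
qed

lemma F_nth: "F_TM $ n = tb n"
  by (cases "n = 0") (simp_all add: F_TM_def tb_def tb_0[unfolded tb_def])

definition Qe :: "bit fps" where "Qe = Abs_fps (\<lambda>n. if even n then 1 else 0)"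

lemma Qe_inv: "(1 + fps_X^2) * Qe = 1"
proof (rule fps_ext)
  fix n show "((1 + fps_X^2) * Qe) $ n = (1::bit fps) $ n"
    by (cases "n < 2") (auto simp: distrib_right fps_X_power_mult_nth Qe_def)
qed

lemma F_split: "F_TM = (1 + fps_X) * F_TM^2 + fps_X * Qe"
proof (rule fps_ext)
  fix n
  have "((1 + fps_X) * F_TM^2 + fps_X * Qe) $ n
      = (F_TM*F_TM) $ n + (if n = 0 then 0 else (F_TM*F_TM)$(n-1)) + (if n = 0 then 0 else Qe $ (n-1))"
    by (simp only: distrib_right mult_1 fps_add_nth fps_X_mult_nth power2_eq_square)
  also have "\<dots> = F_TM $ n"
  proof (cases "even n")
    case True
    then obtain m where m: "n = 2*m" by blast
    show ?thesis
    proof (cases m)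
      case 0 then show ?thesis using m by (simp add: sq_nth F_nth tb_0)
    next
      case (Suc k)
      have "n - 1 = 2*k+1" using m Suc by simp
      then show ?thesis using m Suc tb_even[of m] by (simp add: sq_nth F_nth Qe_def)
    qed
  next
    case False
    then obtain m where m: "n = 2*m+1" using oddE by blast
    then show ?thesis using tb_odd[of m] by (simp add: sq_nth F_nth Qe_def add.commute)
  qed
  finally show "F_TM $ n = ((1 + fps_X) * F_TM^2 + fps_X * Qe) $ n" by simp
qed

lemma FE: "(1 + fps_X^2) * F_TM = (1 + fps_X + fps_X^2 + fps_X^3) * F_TM^2 + fps_X"
proof -
  have "(1 + fps_X^2) * F_TM = ((1 + fps_X^2) * (1 + fps_X)) * F_TM^2 + fps_X * ((1 + fps_X^2) * Qe)"
    by (subst F_split) (simp add: algebra_simps)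
  also have "(1 + fps_X^2) * (1 + fps_X) = (1 + fps_X + fps_X^2 + fps_X^3 :: bit fps)"
    by (simp add: algebra_simps eval_nat_numeral)
  finally show ?thesis by (simp add: Qe_inv)
qed

definition agr :: "nat \<Rightarrow> bit fps \<Rightarrow> bit fps \<Rightarrow> bool" where
  "agr n A B = (\<forall>k\<le>n. A$k = B$k)"

lemma agr_refl: "agr n A A" by (simp add: agr_def)
lemma agr_add: "agr n A A' \<Longrightarrow> agr n B B' \<Longrightarrow> agr n (A+B) (A'+B')"
  by (simp add: agr_def)
lemma agr_mult: "agr n A A' \<Longrightarrow> agr n B B' \<Longrightarrow> agr n (A*B) (A'*B')"
  unfolding agr_def fps_mult_nth by (auto intro!: sum.cong)
lemma agr_power: "agr n A A' \<Longrightarrow> agr n (A^m) (A'^m)"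
  by (induction m) (simp_all add: agr_refl agr_mult)

definition PP :: "bit fps \<Rightarrow> bit fps" where
  "PP Y = (1 + Y + Y^2 + Y^3) * fps_X + (1 + Y^2)"

lemma EE_PP: "EE Y = Y + fps_X * PP Y"
  unfolding EE_def PP_def by (simp add: algebra_simps power2_eq_square)

lemma agr_PP:
  assumes a: "agr n Y Z" shows "agr n (PP Y) (PP Z)"
proof -
  have p: "agr n (Y^k) (Z^k)" for k using agr_power[OF a] .
  have 1: "agr n (1 + Y + Y^2 + Y^3) (1 + Z + Z^2 + Z^3)"
    by (rule agr_add[OF agr_add[OF agr_add[OF agr_refl a] p] p])
  have 2: "agr n (1 + Y^2) (1 + Z^2)" by (rule agr_add[OF agr_refl p])
  show ?thesis unfolding PP_def by (rule agr_add[OF agr_mult[OF 1 agr_refl] 2])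
qed

lemma bit_sum0: "(a::bit) + b = 0 \<Longrightarrow> a = b"
  by (cases a; cases b) simp_all

lemma EE_unique:
  assumes "EE Y = 0" "EE Z = 0" "Y$0 = 0" "Z$0 = 0"
  shows "Y = Z"
proof -
  have "agr n Y Z" for n
  proof (induction n)
    case 0 then show ?case using assms by (simp add: agr_def)
  next
    case (Suc n)
    have "Y $ Suc n + PP Y $ n = 0"
      using arg_cong[OF assms(1), of "\<lambda>f. f $ Suc n"] unfolding EE_PP by simp
    hence y: "Y $ Suc n = PP Y $ n" by (rule bit_sum0)
    have "Z $ Suc n + PP Z $ n = 0"
      using arg_cong[OF assms(2), of "\<lambda>f. f $ Suc n"] unfolding EE_PP by simp
    hence z: "Z $ Suc n = PP Z $ n" by (rule bit_sum0)
    have "PP Y $ n = PP Z $ n" using agr_PP[OF Suc.IH] by (simp add: agr_def)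
    then show ?case using Suc.IH y z by (auto simp: agr_def le_Suc_eq)
  qed
  then show ?thesis by (auto simp: agr_def fps_eq_iff)
qed

lemma G0: "G_TM $ 0 = 0" by (simp add: G_TM_def fps_inv_def)

lemma tb1: "tb 1 = 1" using tb_odd[of 0] tb_0 by simp

lemma FG: "F_TM oo G_TM = fps_X"
  unfolding G_TM_def by (rule fps_inv_right) (simp_all add: F_nth tb_0 tb1[simplified])

lemma EE_G: "EE G_TM = 0"
proof -
  have "((1 + fps_X^2) * F_TM) oo G_TM = ((1 + fps_X + fps_X^2 + fps_X^3) * F_TM^2 + fps_X) oo G_TM"
    using FE by simp
  hence e: "(1 + G_TM^2) * fps_X = (1 + G_TM + G_TM^2 + G_TM^3) * fps_X^2 + G_TM"
    using G0 FG
    by (simp add: fps_compose_add_distrib fps_compose_mult_distrib fps_compose_power[symmetric])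
  show ?thesis unfolding EE_def e by (simp add: add.assoc[symmetric])
qed

lemma Gc0: "Gc $ 0 = 0" by (simp add: Gc_def)

lemma G_eq: "G_TM = Gc"
  using EE_unique[OF EE_G EE_Gc G0 Gc0] .

theorem mainTheorem4:
  fixes n :: nat
  assumes "n \<ge> 1"
  shows "(fps_nth G_TM n = 1 \<longleftrightarrow> (\<forall>k\<ge>1. (n + 1) div 4 ^ k mod 4 \<in> {0, 2}))
       \<and> ((\<forall>k\<ge>1. (n + 1) div 4 ^ k mod 4 \<in> {0, 2})
            \<longleftrightarrow> (\<forall>k\<ge>1. (n + 1) div 2 ^ (2 * k) mod 2 = 0))"
proof
  have h: "gp (N div 4) \<longleftrightarrow> (\<forall>k\<ge>1. N div 4 ^ k mod 4 \<in> {0, 2})" for N :: nat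
  proof
    assume a: "gp (N div 4)"
    show "\<forall>k\<ge>1. N div 4 ^ k mod 4 \<in> {0, 2}"
    proof (intro allI impI)
      fix k :: nat assume "k \<ge> 1"
      then obtain j where "k = Suc j" by (cases k) auto
      then have "N div 4^k = N div 4 div 4^j" by (simp add: div_mult2_eq)
      then show "N div 4 ^ k mod 4 \<in> {0, 2}" using a unfolding gp_def by simp
    qed
  next
    assume a: "\<forall>k\<ge>1. N div 4 ^ k mod 4 \<in> {0, 2}"
    show "gp (N div 4)" unfolding gp_def
    proof
      fix j
      have "N div 4 div 4^j = N div 4^(Suc j)" by (simp add: div_mult2_eq)
      then show "N div 4 div 4 ^ j mod 4 \<in> {0, 2}" using a[rule_format, of "Suc j"] by simp
    qed
  qed
  show "fps_nth G_TM n = 1 \<longleftrightarrow> (\<forall>k\<ge>1. (n + 1) div 4 ^ k mod 4 \<in> {0, 2})"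
    using assms h[of "n+1"] by (simp add: G_eq Gc_def)
  have d0: "(d mod 4 = 0 \<or> d mod 4 = 2) \<longleftrightarrow> d mod 2 = 0" for d :: nat by presburger
  have d: "(d mod 4 \<in> {0,2}) \<longleftrightarrow> d mod 2 = 0" for d :: nat using d0[of d] by simp
  have p: "(2::nat)^(2*k) = 4^k" for k by (simp add: power_mult)
  show "(\<forall>k\<ge>1. (n + 1) div 4 ^ k mod 4 \<in> {0, 2})
            \<longleftrightarrow> (\<forall>k\<ge>1. (n + 1) div 2 ^ (2 * k) mod 2 = 0)"
    by (simp only: p d)
qed

end
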